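(* Let $C\subset\mathbb{R}^N$ be closed and nonempty, let $h:\mathbb{R}^N\to\mathbb{R}$ be differentiable with $L$-Lipschitz gradient ($L>0$), and suppose $f:=h+\delta_C$ is a K\L{} function. Fix $\varepsilon>0$. Let $x^0\in\mathbb{R}^N$ and let $(x^k)$ be a bounded sequence generated by $$x^{k+1}\in\mathrm{proj}_C^{A_k}\big(x^k-\lambda_kA_k^{-1}\nabla h(x^k)\big),$$ where $A_k=P_k+\varepsilon I_N$, $P_k=\mathrm{proj}_{\mathcal S_+(\mathbb{R}^N)}(H_k)$ and $H_k\in\partial^2h(x^k)$, and the step sizes satisfy $0<\lambda_k\le\bar\lambda<\varepsilon/L$, $(\lambda_k)\notin\ell^1$, and $\sup_k\lambda_{k+1}/\lambda_k<+\infty$. Then $\sum_k\|x^{k+1}-x^k\|<\infty$ and $(x^k)$ converges to a critical point of $f$.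
   Context: $\delta_C$ is the indicator function of $C$ ($0$ on $C$, $+\infty$ outside). For a symmetric positive definite matrix $A$, $\mathrm{proj}_C^A(z)=\arg\min_{y\in C}\langle A(y-z),y-z\rangle$. $\mathcal S_+(\mathbb{R}^N)$ is the closed convex cone of symmetric positive semidefinite matrices and $\mathrm{proj}_{\mathcal S_+(\mathbb{R}^N)}$ the Frobenius-norm projection onto it. The generalized (Clarke) Hessian is $\partial^2h(x)=\mathrm{co}\{\lim_n\nabla^2h(x_n): \nabla h \text{ differentiable at } x_n,\ x_n\to x\}$. Critical point: $0\in\partial f(x)$, $\partial f$ the limiting Fréchet subdifferential. K\L{} function: proper lsc $f$ such that at every $x^*$ with $\partial f(x^* )\ne\emptyset$ there are $\eta\in]0,\infty]$, $\delta>0$ and a continuous concave $\varphi:[0,\eta[\to[0,\infty[$, $\varphi(0)=0$, $C^1$ with $\varphi'>0$ on $]0,\eta[$, with $\varphi'(f(x)-f(x^* ))\inf_{p\in\partial f(x)}\|p\|\ge1$ whenever $\|x-x^*\|<\delta$ and $f(x^* )<f(x)<f(x^* )+\eta$. *)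

theory Defs
  imports "HOL-Analysis.Analysis"
begin

definition plus_indicator :: "('a \<Rightarrow> real) \<Rightarrow> 'a set \<Rightarrow> 'a \<Rightarrow> ereal" where
  "plus_indicator h C x = (if x \<in> C then ereal (h x) else \<infinity>)"

definition frechet_subdiff :: "('a::real_inner \<Rightarrow> ereal) \<Rightarrow> 'a \<Rightarrow> 'a set" where
  "frechet_subdiff f x = {v. \<bar>f x\<bar> \<noteq> \<infinity> \<and>
     (\<forall>e>0. \<exists>d>0. \<forall>y. norm (y - x) < d \<longrightarrow>
        f y \<ge> f x + ereal (v \<bullet> (y - x) - e * norm (y - x)))}"

definition lim_subdiff :: "('a::real_inner \<Rightarrow> ereal) \<Rightarrow> 'a \<Rightarrow> 'a set" where
  "lim_subdiff f x = {v. \<exists>xs vs. xs \<longlonglongrightarrow> x \<and> (\<lambda>n. f (xs n)) \<longlonglongrightarrow> f x \<and>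
     (\<forall>n. vs n \<in> frechet_subdiff f (xs n)) \<and> vs \<longlonglongrightarrow> v}"

definition proper_fun :: "('a \<Rightarrow> ereal) \<Rightarrow> bool" where
  "proper_fun f \<longleftrightarrow> (\<forall>x. f x \<noteq> -\<infinity>) \<and> (\<exists>x. f x < \<infinity>)"

definition lsc_fun :: "('a::topological_space \<Rightarrow> ereal) \<Rightarrow> bool" where
  "lsc_fun f \<longleftrightarrow> (\<forall>x. f x \<le> Liminf (at x) f)"

definition KL_function :: "('a::real_inner \<Rightarrow> ereal) \<Rightarrow> bool" where
  "KL_function f \<longleftrightarrow> proper_fun f \<and> lsc_fun f \<and>
    (\<forall>xs. lim_subdiff f xs \<noteq> {} \<longrightarrow>
      (\<exists>(\<eta>::ereal) (\<delta>::real) (\<phi>::real \<Rightarrow> real) \<phi>'.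
         0 < \<eta> \<and> 0 < \<delta> \<and>
         continuous_on {t. 0 \<le> t \<and> ereal t < \<eta>} \<phi> \<and>
         concave_on {t. 0 \<le> t \<and> ereal t < \<eta>} \<phi> \<and>
         \<phi> 0 = 0 \<and> (\<forall>t. 0 \<le> t \<and> ereal t < \<eta> \<longrightarrow> 0 \<le> \<phi> t) \<and>
         (\<forall>t. 0 < t \<and> ereal t < \<eta> \<longrightarrow> (\<phi> has_real_derivative \<phi>' t) (at t) \<and> 0 < \<phi>' t) \<and>
         continuous_on {t. 0 < t \<and> ereal t < \<eta>} \<phi>' \<and>
         (\<forall>x. norm (x - xs) < \<delta> \<and> f xs < f x \<and> f x < f xs + \<eta> \<longrightarrow>
            ereal (\<phi>' (real_of_ereal (f x - f xs))) * (INF p\<in>lim_subdiff f x. ereal (norm p)) \<ge> 1)))"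

text \<open>Generalized (Clarke) Hessian, in terms of the gradient g of h:
  convex hull of limits of Jacobians of g at points where g is differentiable.\<close>
definition clarke_hessian :: "(real^'n \<Rightarrow> real^'n) \<Rightarrow> real^'n \<Rightarrow> (real^'n^'n) set" where
  "clarke_hessian g x = convex hull {M. \<exists>xs Ms.
      (\<forall>n. (g has_derivative (\<lambda>v. Ms n *v v)) (at (xs n))) \<and> xs \<longlonglongrightarrow> x \<and> Ms \<longlonglongrightarrow> M}"

text \<open>Cone of symmetric positive semidefinite matrices; the norm on real^'n^'n is Frobenius.\<close>
definition psd_cone :: "(real^'n^'n) set" where
  "psd_cone = {M. transpose M = M \<and> (\<forall>v. 0 \<le> v \<bullet> (M *v v))}"

definition proj_psd :: "real^'n^'n \<Rightarrow> real^'n^'n" where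
  "proj_psd H = closest_point psd_cone H"

definition proj_metric :: "(real^'n) set \<Rightarrow> real^'n^'n \<Rightarrow> real^'n \<Rightarrow> (real^'n) set" where
  "proj_metric C A z = {y \<in> C. \<forall>y'\<in>C. (A *v (y - z)) \<bullet> (y - z) \<le> (A *v (y' - z)) \<bullet> (y' - z)}"

end

theory Submission
  imports Defs
begin

lemma descent_aux:
  fixes h :: "'a::real_inner \<Rightarrow> real" and g :: "'a \<Rightarrow> 'a"
  assumes grad: "\<And>y. (h has_derivative (\<lambda>v. g y \<bullet> v)) (at y)"
    and lip: "L-lipschitz_on UNIV g" and s: "s = 1 \<or> s = -1"
  shows "s * (h y - h x - g x \<bullet> (y - x)) \<le> L / 2 * (norm (y - x))^2"
proof -
  define d where "d = y - x"
  define \<psi> where "\<psi> t = s * (h (x + t *\<^sub>R d) - t * (g x \<bullet> d)) - L/2 * t^2 * (norm d)^2" for t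
  define \<psi>' where "\<psi>' t = s * (g (x + t *\<^sub>R d) \<bullet> d - g x \<bullet> d) - L * t * (norm d)^2" for t
  have der: "DERIV \<psi> t :> \<psi>' t" for t
  proof -
    have "((\<lambda>t. x + t *\<^sub>R d) has_derivative (\<lambda>u. u *\<^sub>R d)) (at t)"
      by (auto intro!: derivative_eq_intros)
    from has_derivative_compose[OF this grad]
    have "((\<lambda>t. h (x + t *\<^sub>R d)) has_derivative (\<lambda>u. g (x + t *\<^sub>R d) \<bullet> (u *\<^sub>R d))) (at t)" .
    then have 1: "((\<lambda>t. h (x + t *\<^sub>R d)) has_real_derivative (g (x + t *\<^sub>R d) \<bullet> d)) (at t)"
      unfolding has_field_derivative_def
    proof -
      have "(\<lambda>u. g (x + t *\<^sub>R d) \<bullet> (u *\<^sub>R d)) = (*) (g (x + t *\<^sub>R d) \<bullet> d)"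
        by (auto simp: fun_eq_iff)
      thus "((\<lambda>t. h (x + t *\<^sub>R d)) has_derivative (*) (g (x + t *\<^sub>R d) \<bullet> d)) (at t)"
        using \<open>((\<lambda>t. h (x + t *\<^sub>R d)) has_derivative _) (at t)\<close> by simp
    qed
    show ?thesis unfolding \<psi>_def \<psi>'_def
      by (auto intro!: derivative_eq_intros 1 simp: power2_eq_square algebra_simps)
  qed
  have nonpos: "\<psi>' t \<le> 0" if "0 \<le> t" for t
  proof -
    have "s * (g (x + t *\<^sub>R d) \<bullet> d - g x \<bullet> d) = s * ((g (x + t *\<^sub>R d) - g x) \<bullet> d)"
      by (simp add: inner_diff_left)
    also have "\<dots> \<le> norm (g (x + t *\<^sub>R d) - g x) * norm d"
      using s Cauchy_Schwarz_ineq2[of "g (x + t *\<^sub>R d) - g x" d] by (auto simp: abs_le_iff)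
    also have "\<dots> \<le> (L * norm (t *\<^sub>R d)) * norm d"
      using lipschitz_onD[OF lip, of "x + t *\<^sub>R d" x] by (auto simp: dist_norm intro!: mult_right_mono)
    also have "\<dots> = L * t * (norm d)^2" using that by (simp add: power2_eq_square)
    finally show ?thesis unfolding \<psi>'_def by simp
  qed
  have "\<psi> 1 \<le> \<psi> 0"
  proof -
    obtain z where "0 < z" "z < 1" "\<psi> 1 - \<psi> 0 = (1 - 0) * \<psi>' z"
      using MVT2[of 0 1 \<psi> \<psi>'] der by auto
    thus ?thesis using nonpos[of z] by simp
  qed
  thus ?thesis unfolding \<psi>_def d_def by (simp add: algebra_simps)
qed

lemma descent_upper:
  fixes h :: "'a::real_inner \<Rightarrow> real" and g :: "'a \<Rightarrow> 'a"
  assumes "\<And>y. (h has_derivative (\<lambda>v. g y \<bullet> v)) (at y)" "L-lipschitz_on UNIV g"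
  shows "h y \<le> h x + g x \<bullet> (y - x) + L / 2 * (norm (y - x))^2"
  using descent_aux[OF assms, of 1 y x] by simp

lemma descent_lower:
  fixes h :: "'a::real_inner \<Rightarrow> real" and g :: "'a \<Rightarrow> 'a"
  assumes "\<And>y. (h has_derivative (\<lambda>v. g y \<bullet> v)) (at y)" "L-lipschitz_on UNIV g"
  shows "h y \<ge> h x + g x \<bullet> (y - x) - L / 2 * (norm (y - x))^2"
  using descent_aux[OF assms, of "-1" y x] by simp


lemma deriv_lip_bound:
  fixes g :: "real^'n \<Rightarrow> real^'m" and M :: "real^'n^'m"
  assumes d: "(g has_derivative (\<lambda>v. M *v v)) (at z)" and lip: "L-lipschitz_on UNIV g"
  shows "norm (M *v v) \<le> L * norm v"
proof (cases "v = 0")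
  case True thus ?thesis by simp
next
  case False
  hence nv: "norm v > 0" by simp
  show ?thesis
  proof (rule field_le_epsilon)
    fix e :: real assume e: "e > 0"
    obtain dd where dd: "dd > 0" and H: "\<And>y. norm (y - z) < dd \<Longrightarrow> norm (g y - g z - M *v (y - z)) \<le> (e / norm v) * norm (y - z)"
      using d[unfolded has_derivative_at_alt] e nv by (meson divide_pos_pos)
    define t where "t = dd / 2 / norm v"
    have t: "t > 0" using dd nv by (simp add: t_def)
    have ntv: "norm (t *\<^sub>R v) = dd / 2" using nv dd by (simp add: t_def)
    have 1: "norm (g (z + t *\<^sub>R v) - g z - M *v (t *\<^sub>R v)) \<le> (e / norm v) * norm (t *\<^sub>R v)"
      using H[of "z + t *\<^sub>R v"] ntv dd by simp
    have 2: "norm (g (z + t *\<^sub>R v) - g z) \<le> L * norm (t *\<^sub>R v)"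
      using lipschitz_onD[OF lip, of "z + t *\<^sub>R v" z] by (simp add: dist_norm)
    have "norm (M *v (t *\<^sub>R v)) \<le> norm (g (z + t *\<^sub>R v) - g z) + norm (g (z + t *\<^sub>R v) - g z - M *v (t *\<^sub>R v))"
      by (metis norm_triangle_ineq4 diff_diff_eq2 add_diff_cancel_left' norm_minus_commute order_trans order_refl
          norm_triangle_sub)
    also have "\<dots> \<le> L * norm (t *\<^sub>R v) + (e / norm v) * norm (t *\<^sub>R v)" using 1 2 by simp
    finally have "t * norm (M *v v) \<le> t * (L * norm v + e)"
      using t nv by (simp add: matrix_vector_mult_scaleR algebra_simps)
    thus "norm (M *v v) \<le> L * norm v + e" using t by simp
  qed
qed


lemma psd_cone_closed: "closed (psd_cone :: (real^'n^'n) set)"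
proof -
  have "psd_cone = {M::real^'n^'n. \<forall>i j. M$i$j = M$j$i} \<inter> (\<Inter>v. {M. 0 \<le> v \<bullet> (M *v v)})"
    by (auto simp: psd_cone_def transpose_def vec_eq_iff)
  moreover have "closed {M::real^'n^'n. \<forall>i j. M$i$j = M$j$i}"
    by (intro closed_Collect_all closed_Collect_eq continuous_intros)
  moreover have "closed {M::real^'n^'n. 0 \<le> v \<bullet> (M *v v)}" for v :: "real^'n"
    unfolding inner_vec_def matrix_vector_mult_def
    by (intro closed_Collect_le continuous_intros) 
  ultimately show ?thesis by (metis (no_types, lifting) closed_Int closed_INT)
qed

lemma psd_cone_convex: "convex (psd_cone :: (real^'n^'n) set)"
  unfolding convex_def psd_cone_def
proof (safe)
  fix M N :: "real^'n^'n" and u v :: real and w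
  assume "transpose M = M" "transpose N = N" "\<forall>w. 0 \<le> w \<bullet> (M *v w)" "\<forall>w. 0 \<le> w \<bullet> (N *v w)"
    "0 \<le> u" "0 \<le> v" "u + v = 1"
  thus "transpose (u *\<^sub>R M + v *\<^sub>R N) = u *\<^sub>R M + v *\<^sub>R N"
    by (simp add: transpose_def vec_eq_iff)
  from \<open>\<forall>w. 0 \<le> w \<bullet> (M *v w)\<close> \<open>\<forall>w. 0 \<le> w \<bullet> (N *v w)\<close> \<open>0 \<le> u\<close> \<open>0 \<le> v\<close>
  show "0 \<le> w \<bullet> ((u *\<^sub>R M + v *\<^sub>R N) *v w)"
    by (simp add: matrix_vector_mult_add_rdistrib scaleR_matrix_vector_assoc[symmetric] inner_add_right)
qed

lemma psd_cone_zero: "0 \<in> psd_cone"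
  by (simp add: psd_cone_def transpose_def vec_eq_iff)

lemma proj_psd_in: "proj_psd H \<in> psd_cone"
  unfolding proj_psd_def using psd_cone_closed psd_cone_zero
  by (intro closest_point_in_set) auto

lemma proj_psd_norm: "norm (proj_psd H) \<le> 2 * norm H"
proof -
  have "dist H (proj_psd H) \<le> dist H 0"
    unfolding proj_psd_def using psd_cone_closed psd_cone_zero by (rule closest_point_le)
  hence "norm (H - proj_psd H) \<le> norm H" by (simp add: dist_norm)
  moreover have "norm (proj_psd H) \<le> norm H + norm (H - proj_psd H)"
    by (metis add_diff_cancel_left' diff_add_cancel norm_triangle_ineq4 norm_minus_commute)
  ultimately show ?thesis by simp
qed

lemma entries_bound_closed: "closed {M::real^'n^'m. \<forall>i j. \<bar>M$i$j\<bar> \<le> B}"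
  by (intro closed_Collect_all closed_Collect_le continuous_intros)

lemma entries_bound_convex: "convex {M::real^'n^'m. \<forall>i j. \<bar>M$i$j\<bar> \<le> B}"
  unfolding convex_def
proof (safe)
  fix M N :: "real^'n^'m" and u v :: real and i j
  assume a: "\<forall>i j. \<bar>M$i$j\<bar> \<le> B" "\<forall>i j. \<bar>N$i$j\<bar> \<le> B" "0 \<le> u" "0 \<le> v" "u + v = 1"
  have "\<bar>u * M$i$j + v * N$i$j\<bar> \<le> u * \<bar>M$i$j\<bar> + v * \<bar>N$i$j\<bar>"
    using a by (simp add: abs_triangle_ineq[THEN order_trans] abs_mult)
  also have "\<dots> \<le> u * B + v * B" using a by (intro add_mono mult_left_mono) auto
  finally show "\<bar>(u *\<^sub>R M + v *\<^sub>R N) $ i $ j\<bar> \<le> B" using a by (simp add: distrib_right[symmetric])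
qed

lemma norm_entries: "norm (M::real^'n^'m) \<le> (\<Sum>i\<in>UNIV. \<Sum>j\<in>UNIV. \<bar>M$i$j\<bar>)"
proof -
  have "norm M \<le> (\<Sum>i\<in>UNIV. \<bar>norm (M$i)\<bar>)"
    unfolding norm_vec_def by (simp add: L2_set_le_sum)
  also have "\<dots> \<le> (\<Sum>i\<in>UNIV. \<Sum>j\<in>UNIV. \<bar>M$i$j\<bar>)"
    by (intro sum_mono) (simp add: norm_le_l1_cart)
  finally show ?thesis .
qed

lemma entry_le_norm: "\<bar>(M::real^'n^'m)$i$j\<bar> \<le> norm M"
  using component_le_norm_cart[of "M$i" j] Finite_Cartesian_Product.norm_nth_le[of M i] by linarith

lemma hess_entries:
  fixes g :: "real^'n \<Rightarrow> real^'n"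
  assumes lip: "L-lipschitz_on UNIV g" and H: "H \<in> clarke_hessian g z"
  shows "\<bar>H$i$j\<bar> \<le> L"
proof -
  let ?E = "{M::real^'n^'n. \<forall>i j. \<bar>M$i$j\<bar> \<le> L}"
  have "M \<in> ?E" if "\<forall>n. (g has_derivative (\<lambda>v. Ms n *v v)) (at (xs n))" "Ms \<longlonglongrightarrow> M" for M Ms xs
  proof (rule closed_sequentially[OF entries_bound_closed _ that(2)])
    fix n
    have "onorm ((*v) (Ms n)) \<le> L"
      using deriv_lip_bound[OF that(1)[rule_format, of n] lip] by (intro onorm_le) auto
    thus "Ms n \<in> ?E" using matrix_component_le_onorm[of "Ms n"] by (auto intro: order_trans)
  qed
  hence "clarke_hessian g z \<subseteq> ?E"
    unfolding clarke_hessian_def by (intro hull_minimal entries_bound_convex) blast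
  thus ?thesis using H by blast
qed


lemma psd_sym:
  fixes P :: "real^'n^'n"
  assumes "transpose P = P"
  shows "(P *v u) \<bullet> w = u \<bullet> (P *v w)"
  using dot_lmul_matrix[of u P w] vector_transpose_matrix[of u P] assms by simp

lemma A_facts:
  fixes P :: "real^'n^'n"
  assumes P: "P \<in> psd_cone" and e: "\<epsilon> > 0"
  defines "A \<equiv> P + \<epsilon> *\<^sub>R mat 1"
  shows "(A *v u) \<bullet> w = u \<bullet> (A *v w)"
    and "\<epsilon> * (norm u)^2 \<le> (A *v u) \<bullet> u"
    and "A *v (matrix_inv A *v w) = w"
proof -
  have tP: "transpose P = P" and pP: "\<And>v. 0 \<le> v \<bullet> (P *v v)" using P by (auto simp: psd_cone_def)
  have Au: "A *v u = P *v u + \<epsilon> *\<^sub>R u" for u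
    by (simp add: A_def matrix_vector_mult_add_rdistrib scaleR_matrix_vector_assoc[symmetric])
  show "(A *v u) \<bullet> w = u \<bullet> (A *v w)"
    using psd_sym[OF tP, of u w] by (simp add: Au inner_add_left inner_add_right inner_commute)
  have pos: "\<epsilon> * (norm u)^2 \<le> (A *v u) \<bullet> u" for u
  proof -
    have "(A *v u) \<bullet> u = u \<bullet> (P *v u) + \<epsilon> * (u \<bullet> u)"
      unfolding Au by (simp only: inner_add_left inner_scaleR_left) (simp add: inner_commute)
    thus ?thesis using pP[of u] by (simp add: power2_norm_eq_inner)
  qed
  thus "\<epsilon> * (norm u)^2 \<le> (A *v u) \<bullet> u" .
  have inj: "inj ((*v) A)"
  proof (rule injI)
    fix a b assume "A *v a = A *v b"
    hence "A *v (a - b) = 0" by (simp add: matrix_vector_mult_diff_distrib)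
    hence "\<epsilon> * (norm (a - b))^2 \<le> 0" using pos[of "a - b"] by simp
    thus "a = b" using e by (simp add: mult_le_0_iff)
  qed
  have "surj ((*v) A)"
    using linear_injective_imp_surjective[OF matrix_vector_mul_linear inj] by simp
  hence "invertible A" using inj invertible_eq_bij bij_def by blast
  hence "\<exists>A'. A ** A' = mat 1 \<and> A' ** A = mat 1" by (simp add: invertible_def)
  hence "A ** matrix_inv A = mat 1" unfolding matrix_inv_def by (rule someI2_ex) auto
  thus "A *v (matrix_inv A *v w) = w" by (simp add: matrix_vector_mul_assoc)
qed

lemma step_ineq:
  fixes P :: "real^'n^'n"
  assumes P: "P \<in> psd_cone" and e: "\<epsilon> > 0"
    and y: "y \<in> proj_metric C (P + \<epsilon> *\<^sub>R mat 1) (x - lam *\<^sub>R (matrix_inv (P + \<epsilon> *\<^sub>R mat 1) *v gx))"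
    and y': "y' \<in> C"
  shows "((P + \<epsilon> *\<^sub>R mat 1) *v (y - x)) \<bullet> (y - x) + 2 * lam * (gx \<bullet> (y - x))
     \<le> ((P + \<epsilon> *\<^sub>R mat 1) *v (y' - x)) \<bullet> (y' - x) + 2 * lam * (gx \<bullet> (y' - x))"
proof -
  define A where "A = P + \<epsilon> *\<^sub>R mat 1"
  define w where "w = matrix_inv A *v gx"
  note AF = A_facts[OF P e, folded A_def]
  have Aw: "A *v w = gx" unfolding w_def by (rule AF(3))
  have exp: "(A *v (u + lam *\<^sub>R w)) \<bullet> (u + lam *\<^sub>R w) = (A *v u) \<bullet> u + 2 * lam * (gx \<bullet> u) + lam^2 * (gx \<bullet> w)" for u
  proof -
    have "A *v (u + lam *\<^sub>R w) = A *v u + lam *\<^sub>R gx"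
      by (simp add: matrix_vector_right_distrib matrix_vector_mult_scaleR Aw)
    hence "(A *v (u + lam *\<^sub>R w)) \<bullet> (u + lam *\<^sub>R w) = (A *v u) \<bullet> u + lam * ((A *v u) \<bullet> w) + lam * (gx \<bullet> u) + lam^2 * (gx \<bullet> w)"
      by (simp only: inner_add_left inner_add_right inner_scaleR_left inner_scaleR_right power2_eq_square) (simp add: algebra_simps)
    moreover have "(A *v u) \<bullet> w = gx \<bullet> u" using AF(1)[of u w] Aw by (simp add: inner_commute)
    ultimately show ?thesis by simp
  qed
  have "y \<in> C" and "(A *v (y - (x - lam *\<^sub>R w))) \<bullet> (y - (x - lam *\<^sub>R w)) \<le> (A *v (y' - (x - lam *\<^sub>R w))) \<bullet> (y' - (x - lam *\<^sub>R w))"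
    using y y' by (auto simp: proj_metric_def A_def w_def)
  moreover have "y - (x - lam *\<^sub>R w) = (y - x) + lam *\<^sub>R w" "y' - (x - lam *\<^sub>R w) = (y' - x) + lam *\<^sub>R w"
    by (simp_all add: algebra_simps)
  ultimately show ?thesis using exp[of "y - x"] exp[of "y' - x"] unfolding A_def by simp
qed


lemma frechet_from_quad:
  fixes h :: "real^'n \<Rightarrow> real"
  assumes x: "x \<in> C" and K: "K \<ge> 0"
    and q: "\<And>y. y \<in> C \<Longrightarrow> h y \<ge> h x + v \<bullet> (y - x) - K * (norm (y - x))^2"
  shows "v \<in> frechet_subdiff (plus_indicator h C) x"
  unfolding frechet_subdiff_def
proof (rule CollectI, intro conjI allI impI)
  show "\<bar>plus_indicator h C x\<bar> \<noteq> \<infinity>" using x by (simp add: plus_indicator_def)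
  fix e :: real assume e: "e > 0"
  show "\<exists>d>0. \<forall>y. norm (y - x) < d \<longrightarrow>
        plus_indicator h C x + ereal (v \<bullet> (y - x) - e * norm (y - x)) \<le> plus_indicator h C y"
  proof (intro exI[of _ "e / (K + 1)"] conjI allI impI)
    show "e / (K + 1) > 0" using e K by simp
    fix y assume y: "norm (y - x) < e / (K + 1)"
    show "plus_indicator h C x + ereal (v \<bullet> (y - x) - e * norm (y - x)) \<le> plus_indicator h C y"
    proof (cases "y \<in> C")
      case False thus ?thesis by (simp add: plus_indicator_def)
    next
      case True
      have "K * (norm (y - x))^2 \<le> e * norm (y - x)"
      proof -
        have "K * norm (y - x) \<le> (K + 1) * norm (y - x)" by (simp add: distrib_right)
        also have "\<dots> \<le> e" using y K by (simp add: pos_less_divide_eq mult.commute less_imp_le)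
        finally show ?thesis by (simp add: power2_eq_square mult.assoc[symmetric] mult_right_mono)
      qed
      hence "h x + (v \<bullet> (y - x) - e * norm (y - x)) \<le> h y" using q[OF True] by linarith
      thus ?thesis using True x by (simp add: plus_indicator_def)
    qed
  qed
qed

lemma frechet_lim: "v \<in> frechet_subdiff f x \<Longrightarrow> v \<in> lim_subdiff f x"
  unfolding lim_subdiff_def by (intro CollectI exI[of _ "\<lambda>_. x"] exI[of _ "\<lambda>_. v"]) auto

lemma one_step:
  fixes C :: "(real^'n) set" and h :: "real^'n \<Rightarrow> real" and g :: "real^'n \<Rightarrow> real^'n"
    and P :: "real^'n^'n"
  assumes grad: "\<And>y. (h has_derivative (\<lambda>v. g y \<bullet> v)) (at y)"
    and lip: "L-lipschitz_on UNIV g" and L: "L \<ge> 0"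
    and P: "P \<in> psd_cone" and e: "\<epsilon> > 0" and lam: "lam > 0"
    and R: "\<And>u. norm (P *v u) \<le> R * norm u" and R0: "R \<ge> 0"
    and y: "y \<in> proj_metric C (P + \<epsilon> *\<^sub>R mat 1) (x - lam *\<^sub>R (matrix_inv (P + \<epsilon> *\<^sub>R mat 1) *v g x))"
  shows "y \<in> C"
    and "\<exists>v. v \<in> frechet_subdiff (plus_indicator h C) y \<and> norm v \<le> (L + (R + \<epsilon>) / lam) * norm (y - x)"
    and "x \<in> C \<Longrightarrow> h y \<le> h x - ((\<epsilon> / lam - L) / 2) * (norm (y - x))^2"
proof -
  define A where "A = P + \<epsilon> *\<^sub>R mat 1"
  note AF = A_facts[OF P e, folded A_def]
  note SI = step_ineq[OF P e y, folded A_def]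
  show yC: "y \<in> C" using y by (simp add: proj_metric_def)
  have Abound: "norm (A *v u) \<le> (R + \<epsilon>) * norm u" for u
  proof -
    have "A *v u = P *v u + \<epsilon> *\<^sub>R u"
      by (simp add: A_def matrix_vector_mult_add_rdistrib scaleR_matrix_vector_assoc[symmetric])
    hence "norm (A *v u) \<le> norm (P *v u) + \<epsilon> * norm u" using e
      by (metis abs_of_pos norm_scaleR norm_triangle_ineq)
    thus ?thesis using R[of u] by (simp add: distrib_right)
  qed
  have Qup: "(A *v u) \<bullet> u \<le> (R + \<epsilon>) * (norm u)^2" for u
  proof -
    have "(A *v u) \<bullet> u \<le> norm (A *v u) * norm u" by (rule norm_cauchy_schwarz)
    also have "\<dots> \<le> (R + \<epsilon>) * norm u * norm u" using Abound[of u] by (simp add: mult_right_mono)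
    finally show ?thesis by (simp add: power2_eq_square mult.assoc)
  qed
  define d where "d = y - x"
  show "x \<in> C \<Longrightarrow> h y \<le> h x - ((\<epsilon> / lam - L) / 2) * (norm (y - x))^2"
  proof -
    assume xC: "x \<in> C"
    have "(A *v d) \<bullet> d + 2 * lam * (g x \<bullet> d) \<le> 0" using SI[OF xC] by (simp add: d_def)
    hence "\<epsilon> * (norm d)^2 + 2 * lam * (g x \<bullet> d) \<le> 0" using AF(2)[of d] by linarith
    hence "g x \<bullet> d \<le> - (\<epsilon> / lam) * (norm d)^2 / 2" using lam by (simp add: field_simps)
    moreover have "h y \<le> h x + g x \<bullet> d + L / 2 * (norm d)^2"
      using descent_upper[OF grad lip, of y x] by (simp add: d_def)
    ultimately show ?thesis unfolding d_def[symmetric] by (simp add: field_simps)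
  qed
  define v where "v = g y - g x - (1 / lam) *\<^sub>R (A *v d)"
  show "\<exists>v. v \<in> frechet_subdiff (plus_indicator h C) y \<and> norm v \<le> (L + (R + \<epsilon>) / lam) * norm (y - x)"
  proof (intro exI conjI)
    show "v \<in> frechet_subdiff (plus_indicator h C) y"
    proof (rule frechet_from_quad[OF yC, of "L / 2 + (R + \<epsilon>) / (2 * lam)"])
      show "0 \<le> L / 2 + (R + \<epsilon>) / (2 * lam)" using L R0 e lam by simp
      fix y' assume y': "y' \<in> C"
      define u where "u = y' - y"
      have "(A *v d) \<bullet> d + 2 * lam * (g x \<bullet> d) \<le> (A *v (d + u)) \<bullet> (d + u) + 2 * lam * (g x \<bullet> (d + u))"
        using SI[OF y'] by (simp add: d_def u_def)
      moreover have "(A *v (d + u)) \<bullet> (d + u) = (A *v d) \<bullet> d + 2 * ((A *v d) \<bullet> u) + (A *v u) \<bullet> u"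
      proof -
        have "(A *v (d + u)) \<bullet> (d + u) = (A *v d) \<bullet> d + (A *v d) \<bullet> u + (A *v u) \<bullet> d + (A *v u) \<bullet> u"
          by (simp add: matrix_vector_right_distrib inner_add_left inner_add_right)
        moreover have "(A *v u) \<bullet> d = (A *v d) \<bullet> u" using AF(1)[of u d] by (simp add: inner_commute)
        ultimately show ?thesis by simp
      qed
      ultimately have "0 \<le> 2 * ((A *v d) \<bullet> u) + (A *v u) \<bullet> u + 2 * lam * (g x \<bullet> u)"
        by (simp add: inner_add_right algebra_simps)
      hence "0 \<le> 2 * ((A *v d) \<bullet> u) + (R + \<epsilon>) * (norm u)^2 + 2 * lam * (g x \<bullet> u)"
        using Qup[of u] by linarith
      hence 1: "- (g x \<bullet> u) - (1 / lam) * ((A *v d) \<bullet> u) \<le> (R + \<epsilon>) / (2 * lam) * (norm u)^2"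
      proof -
        have eq: "- (g x \<bullet> u) - (1 / lam) * ((A *v d) \<bullet> u) = - (2 * ((A *v d) \<bullet> u) + 2 * lam * (g x \<bullet> u)) / (2 * lam)"
          using lam by (simp add: field_simps)
        have "- (2 * ((A *v d) \<bullet> u) + 2 * lam * (g x \<bullet> u)) \<le> (R + \<epsilon>) * (norm u)^2"
          using \<open>0 \<le> 2 * ((A *v d) \<bullet> u) + (R + \<epsilon>) * (norm u)^2 + 2 * lam * (g x \<bullet> u)\<close> by linarith
        hence "- (2 * ((A *v d) \<bullet> u) + 2 * lam * (g x \<bullet> u)) / (2 * lam) \<le> (R + \<epsilon>) * (norm u)^2 / (2 * lam)"
          using lam by (intro divide_right_mono) auto
        thus ?thesis unfolding eq by simp
      qed
      have 2: "v \<bullet> u = g y \<bullet> u - g x \<bullet> u - (1 / lam) * ((A *v d) \<bullet> u)"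
        by (simp add: v_def inner_diff_left)
      have 3: "h y' \<ge> h y + g y \<bullet> u - L / 2 * (norm u)^2"
        using descent_lower[OF grad lip, of y y'] by (simp add: u_def)
      show "h y + v \<bullet> (y' - y) - (L / 2 + (R + \<epsilon>) / (2 * lam)) * (norm (y' - y))^2 \<le> h y'"
        using 1 2 3 unfolding u_def[symmetric] by (simp add: algebra_simps)
    qed
    have "norm v \<le> norm (g y - g x) + norm ((1 / lam) *\<^sub>R (A *v d))"
      unfolding v_def by (rule norm_triangle_ineq4)
    also have "\<dots> \<le> L * norm d + (1 / lam) * ((R + \<epsilon>) * norm d)"
      using lipschitz_onD[OF lip, of y x] Abound[of d] lam
      by (intro add_mono) (auto simp: dist_norm d_def intro!: mult_left_mono divide_right_mono)
    finally show "norm v \<le> (L + (R + \<epsilon>) / lam) * norm (y - x)"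
      by (simp add: d_def algebra_simps add_divide_distrib)
  qed
qed


lemma amgm2:
  fixes x p q :: real
  assumes "0 \<le> x" "0 \<le> p" "0 \<le> q" "x^2 \<le> p * q"
  shows "2 * x \<le> p + q"
proof -
  have "(2 * x)^2 = 4 * x^2" by (simp add: power2_eq_square)
  also have "\<dots> \<le> 4 * (p * q)" using assms(4) by simp
  also have "\<dots> \<le> (p + q)^2"
  proof -
    have "0 \<le> (p - q)^2" by simp
    thus ?thesis by (simp add: power2_eq_square algebra_simps)
  qed
  finally have "(2 * x)^2 \<le> (p + q)^2" .
  thus ?thesis using assms(2,3) by (rule power2_le_imp_le[OF _ add_nonneg_nonneg])
qed
lemma kl_step_ineq:
  fixes mu0 mu1 M c b Dm Dk p a :: real
  assumes mu0: "0 < mu0" and mu1: "0 < mu1" and M1: "mu1 \<le> M * mu0" and M: "0 < M" and c: "0 < c" and b: "0 < b"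
    and Dm0: "0 \<le> Dm" and Dk: "0 \<le> Dk" and p: "0 < p"
    and h1: "1 \<le> p * (b * Dm / mu0)" and h2: "p * (c * Dk^2 / mu1) \<le> a"
  shows "2 * Dk \<le> Dm + (b * M / c) * a"
proof -
  have pb: "mu0 \<le> p * b * Dm"
  proof -
    have "p * (b * Dm / mu0) = (p * b * Dm) / mu0" by simp
    with h1 have "1 \<le> (p * b * Dm) / mu0" by simp
    thus ?thesis using mu0 by (simp add: le_divide_eq)
  qed
  have a0: "a \<ge> 0"
  proof -
    have "0 \<le> c * Dk^2 / mu1" using c mu1 by simp
    hence "0 \<le> p * (c * Dk^2 / mu1)" using p by (intro mult_nonneg_nonneg) auto
    thus ?thesis using h2 by linarith
  qed
  have e1: "p * (c * Dk^2 / mu1) * mu1 = p * c * Dk^2" using mu1 by simp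
  have "c * Dk^2 * mu0 \<le> c * Dk^2 * (p * b * Dm)" using pb c by (intro mult_left_mono) auto
  also have "\<dots> = (p * c * Dk^2) * (b * Dm)" by (simp add: algebra_simps)
  also have "\<dots> \<le> (a * mu1) * (b * Dm)"
  proof (intro mult_right_mono)
    show "p * c * Dk^2 \<le> a * mu1" using mult_right_mono[OF h2 less_imp_le[OF mu1]] e1 by simp
  qed (use b Dm0 in auto)
  also have "\<dots> \<le> (a * (M * mu0)) * (b * Dm)"
    using a0 M1 b Dm0 by (intro mult_right_mono mult_left_mono) auto
  also have "\<dots> = (a * M * b * Dm) * mu0" by (simp add: algebra_simps)
  finally have "c * Dk^2 * mu0 \<le> (a * M * b * Dm) * mu0" .
  hence "c * Dk^2 \<le> a * M * b * Dm" using mu0 by simp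
  hence "Dk^2 \<le> (a * M * b * Dm) / c" using c by (simp add: le_divide_eq mult.commute)
  also have "(a * M * b * Dm) / c = ((b * M / c) * a) * Dm" by simp
  finally have "Dk^2 \<le> ((b * M / c) * a) * Dm" .
  moreover have "(b * M / c) * a \<ge> 0" using a0 b M c by simp
  ultimately have "2 * Dk \<le> (b * M / c) * a + Dm"
    using Dk Dm0 by (intro amgm2) auto
  thus ?thesis by simp
qed

lemma norm_telescope:
  fixes y :: "nat \<Rightarrow> 'a::real_normed_vector"
  shows "norm (y (k + m) - y k) \<le> (\<Sum>j<m. norm (y (Suc (k + j)) - y (k + j)))"
proof (induction m)
  case 0 thus ?case by simp
next
  case (Suc m)
  have "norm (y (k + Suc m) - y k) \<le> norm (y (Suc (k + m)) - y (k + m)) + norm (y (k + m) - y k)"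
    using norm_triangle_ineq[of "y (Suc (k + m)) - y (k + m)" "y (k + m) - y k"] by simp
  thus ?case using Suc by simp
qed

lemma kl_induct:
  fixes y :: "nat \<Rightarrow> 'a::real_normed_vector" and D \<Phi> :: "nat \<Rightarrow> real"
  assumes D: "\<And>k. D k = norm (y (Suc k) - y k)"
    and ineq: "\<And>k. k \<ge> kz \<Longrightarrow> norm (y k - ys) < \<delta> \<Longrightarrow> 2 * D k \<le> D (k - 1) + K * (\<Phi> k - \<Phi> (Suc k))"
    and \<Phi>: "\<And>k. k \<ge> kz \<Longrightarrow> \<Phi> k \<ge> 0" and K: "K \<ge> 0"
    and start: "norm (y kz - ys) + D (kz - 1) + K * \<Phi> kz < \<delta>"
  shows "summable D"
proof -
  have D0: "D k \<ge> 0" for k using D by simp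
  have J: "norm (y (kz + n) - ys) < \<delta> \<and>
      (\<Sum>j<Suc n. D (kz + j)) + D (kz + n) \<le> D (kz - 1) + K * (\<Phi> kz - \<Phi> (kz + Suc n))" for n
  proof (induction n)
    case 0
    have "K * \<Phi> kz \<ge> 0" using \<Phi>[of kz] K by simp
    hence b: "norm (y kz - ys) < \<delta>" using start D0[of "kz - 1"] by linarith
    show ?case using b ineq[of kz] by simp
  next
    case (Suc n)
    have T: "(\<Sum>j<Suc n. D (kz + j)) \<le> D (kz - 1) + K * \<Phi> kz"
    proof -
      have "K * (\<Phi> kz - \<Phi> (kz + Suc n)) = K * \<Phi> kz - K * \<Phi> (kz + Suc n)" by (simp add: right_diff_distrib)
      moreover have "K * \<Phi> (kz + Suc n) \<ge> 0" using \<Phi>[of "kz + Suc n"] K by simp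
      ultimately show ?thesis using Suc.IH D0[of "kz + n"] by linarith
    qed
    have "norm (y (kz + Suc n) - ys) \<le> norm (y (kz + Suc n) - y kz) + norm (y kz - ys)"
      using norm_triangle_ineq[of "y (kz + Suc n) - y kz" "y kz - ys"] by simp
    also have "norm (y (kz + Suc n) - y kz) \<le> (\<Sum>j<Suc n. D (kz + j))"
      using norm_telescope[of y kz "Suc n"] by (simp add: D)
    finally have b: "norm (y (kz + Suc n) - ys) < \<delta>" using T start by linarith
    have "2 * D (kz + Suc n) \<le> D (kz + n) + K * (\<Phi> (kz + Suc n) - \<Phi> (Suc (kz + Suc n)))"
      using ineq[of "kz + Suc n"] b by simp
    thus ?case using Suc b by (simp add: algebra_simps)
  qed
  have "(\<Sum>j<n. D (j + kz)) \<le> D (kz - 1) + K * \<Phi> kz" for n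
  proof (cases n)
    case 0 thus ?thesis using D0[of "kz - 1"] \<Phi>[of kz] K by simp
  next
    case (Suc m)
    have "K * (\<Phi> kz - \<Phi> (kz + Suc m)) = K * \<Phi> kz - K * \<Phi> (kz + Suc m)" by (simp add: right_diff_distrib)
    moreover have "K * \<Phi> (kz + Suc m) \<ge> 0" using \<Phi>[of "kz + Suc m"] K by simp
    moreover have "(\<Sum>j<n. D (j + kz)) = (\<Sum>j<Suc m. D (kz + j))" using Suc by (simp add: add.commute)
    ultimately show ?thesis using J[of m] D0[of "kz + m"] by linarith
  qed
  hence "summable (\<lambda>j. D (j + kz))" using D0 by (intro summableI_nonneg_bounded) auto
  thus ?thesis by simp
qed

lemma summable_norm_diff_convergent:
  fixes y :: "nat \<Rightarrow> 'a::banach"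
  assumes "summable (\<lambda>k. norm (y (Suc k) - y k))"
  shows "convergent y"
proof -
  have "summable (\<lambda>k. y (Suc k) - y k)" using assms by (rule summable_norm_cancel)
  hence "(\<lambda>n. \<Sum>k<n. y (Suc k) - y k) \<longlonglongrightarrow> (\<Sum>k. y (Suc k) - y k)" by (rule summable_LIMSEQ)
  hence "(\<lambda>n. y n - y 0) \<longlonglongrightarrow> (\<Sum>k. y (Suc k) - y k)" by (simp add: sum_lessThan_telescope)
  hence "(\<lambda>n. (y n - y 0) + y 0) \<longlonglongrightarrow> (\<Sum>k. y (Suc k) - y k) + y 0" by (intro tendsto_intros)
  thus ?thesis by (auto simp: convergent_def)
qed

lemma subseq_to_zero:
  fixes e :: "nat \<Rightarrow> real"
  assumes "\<And>N d. d > 0 \<Longrightarrow> \<exists>k\<ge>N. e k < d" and "\<And>k. e k \<ge> 0"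
  shows "\<exists>s. strict_mono s \<and> (\<lambda>n. e (s n)) \<longlonglongrightarrow> 0"
proof -
  have "\<forall>N n. \<exists>k. k \<ge> N \<and> e k < 1 / (Suc n)"
    using assms(1) by simp
  then obtain f where f: "\<And>N n. f N n \<ge> N \<and> e (f N n) < 1 / (Suc n)"
    by metis
  define s where "s = rec_nat (f 0 0) (\<lambda>n r. f (Suc r) (Suc n))"
  have s0: "s 0 = f 0 0" and sS: "s (Suc n) = f (Suc (s n)) (Suc n)" for n by (simp_all add: s_def)
  have "strict_mono s" unfolding strict_mono_Suc_iff using f sS by (metis Suc_le_lessD)
  moreover have b: "e (s n) < 1 / Suc n" for n
  proof (cases n)
    case 0 thus ?thesis using f[of 0 0] s0 by simp
  next
    case (Suc m) thus ?thesis using f[of "Suc (s m)" "Suc m"] sS[of m] by simp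
  qed
  have "(\<lambda>n. e (s n)) \<longlonglongrightarrow> 0"
  proof (rule tendsto_sandwich[of "\<lambda>_. 0" _ _ "\<lambda>n. 1 / real (Suc n)"])
    show "\<forall>\<^sub>F n in sequentially. 0 \<le> e (s n)" using assms(2) by simp
    show "\<forall>\<^sub>F n in sequentially. e (s n) \<le> 1 / real (Suc n)" using b by (simp add: less_imp_le)
    show "(\<lambda>n. 1 / real (Suc n)) \<longlonglongrightarrow> 0" by (rule LIMSEQ_Suc[OF lim_const_over_n]) 
  qed simp
  ultimately show ?thesis by blast
qed


lemma concave_tangent:
  fixes \<phi> :: "real \<Rightarrow> real" and \<eta> :: ereal
  assumes conc: "concave_on {t. 0 \<le> t \<and> ereal t < \<eta>} \<phi>"
    and a: "0 < a" "ereal a < \<eta>" and b: "0 \<le> b" "ereal b < \<eta>"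
    and d: "(\<phi> has_real_derivative d) (at a)"
  shows "d * (a - b) \<le> \<phi> a - \<phi> b"
proof -
  let ?S = "{t. 0 \<le> t \<and> ereal t < \<eta>}"
  have cvx: "convex ?S"
    unfolding convex_def
  proof (safe)
    fix x y u v :: real assume h: "0 \<le> x" "ereal x < \<eta>" "0 \<le> y" "ereal y < \<eta>" "0 \<le> u" "0 \<le> v" "u + v = 1"
    show "0 \<le> u *\<^sub>R x + v *\<^sub>R y" using h by simp
    have "u * x + v * y \<le> u * max x y + v * max x y" using h by (intro add_mono mult_left_mono) auto
    also have "\<dots> = max x y" using h(7) by (simp add: distrib_right[symmetric])
    finally have "u * x + v * y \<le> x \<or> u * x + v * y \<le> y" by (simp add: max_def split: if_splits)
    hence "ereal (u * x + v * y) \<le> ereal x \<or> ereal (u * x + v * y) \<le> ereal y" by simp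
    hence "ereal (u * x + v * y) < \<eta>"
    proof
      assume "ereal (u * x + v * y) \<le> ereal x" thus ?thesis by (rule le_less_trans[OF _ h(2)])
    next
      assume "ereal (u * x + v * y) \<le> ereal y" thus ?thesis by (rule le_less_trans[OF _ h(4)])
    qed
    thus "ereal (u *\<^sub>R x + v *\<^sub>R y) < \<eta>" by simp
  qed
  have int: "a \<in> interior ?S"
  proof (cases \<eta>)
    case (real e)
    have "ball a (min a (e - a)) \<subseteq> ?S" using a real by (auto simp: dist_real_def abs_less_iff)
    moreover have "min a (e - a) > 0" using a real by simp
    ultimately show ?thesis by (meson centre_in_ball interior_maximal open_ball subsetD)
  next
    case PInf
    have "ball a a \<subseteq> ?S" using a PInf by (auto simp: dist_real_def abs_less_iff)
    thus ?thesis using a(1) by (meson centre_in_ball interior_maximal open_ball subsetD)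
  next
    case MInf thus ?thesis using a by simp
  qed
  have "(-d) * (b - a) \<le> (- \<phi> b) - (- \<phi> a)"
  proof (rule convex_on_imp_above_tangent[where A = ?S])
    show "convex_on ?S (\<lambda>x. - \<phi> x)" using conc by (simp add: concave_on_def)
    show "connected ?S" using cvx by (rule convex_connected)
    show "a \<in> interior ?S" by (rule int)
    show "b \<in> ?S" using b by simp
    show "((\<lambda>x. - \<phi> x) has_real_derivative - d) (at a within ?S)"
      using DERIV_minus[OF d] by (rule has_field_derivative_at_within)
  qed
  thus ?thesis by (simp add: algebra_simps)
qed


theorem mainTheorem15:
  fixes C :: "(real^'n) set" and h :: "real^'n \<Rightarrow> real" and g :: "real^'n \<Rightarrow> real^'n"
    and L \<epsilon> lbar :: real and x :: "nat \<Rightarrow> real^'n" and H :: "nat \<Rightarrow> real^'n^'n"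
    and lam :: "nat \<Rightarrow> real"
  assumes "closed C" and "C \<noteq> {}"
    and grad: "\<And>y. (h has_derivative (\<lambda>v. g y \<bullet> v)) (at y)"
    and "L > 0" and "L-lipschitz_on UNIV g"
    and "KL_function (plus_indicator h C)"
    and "\<epsilon> > 0"
    and "bounded (range x)"
    and Hk: "\<And>k. H k \<in> clarke_hessian g (x k)"
    and step: "\<And>k. x (Suc k) \<in> proj_metric C (proj_psd (H k) + \<epsilon> *\<^sub>R mat 1)
                 (x k - lam k *\<^sub>R (matrix_inv (proj_psd (H k) + \<epsilon> *\<^sub>R mat 1) *v g (x k)))"
    and "\<And>k. 0 < lam k" and "\<And>k. lam k \<le> lbar" and "lbar < \<epsilon> / L"
    and "\<not> summable lam"
    and "bdd_above (range (\<lambda>k. lam (Suc k) / lam k))"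
  shows "summable (\<lambda>k. norm (x (Suc k) - x k)) \<and>
         (\<exists>xs. x \<longlonglongrightarrow> xs \<and> 0 \<in> lim_subdiff (plus_indicator h C) xs)"
proof -
  note closedC = assms(1) and L0 = assms(4) and lip = assms(5) and KL = assms(6) and eps = assms(7)
    and bdd = assms(8) and lampos = assms(11) and lamle = assms(12) and lbar = assms(13)
    and nsum = assms(14) and ratio = assms(15)
  define f where "f = plus_indicator h C"
  define N where "N = real CARD('n)"
  define R where "R = N * N * (2 * (N * N * L))"
  have N0: "N \<ge> 0" by (simp add: N_def)
  have R0: "R \<ge> 0" using N0 L0 by (simp add: R_def)
  have Pb: "norm (proj_psd (H k) *v u) \<le> R * norm u" for k u
  proof -
    have "norm (H k) \<le> (\<Sum>i\<in>UNIV. \<Sum>j\<in>UNIV. \<bar>H k $ i $ j\<bar>)" by (rule norm_entries)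
    also have "\<dots> \<le> (\<Sum>i\<in>(UNIV::'n set). \<Sum>j\<in>(UNIV::'n set). L)"
      using hess_entries[OF lip Hk] by (intro sum_mono) auto
    also have "\<dots> = N * N * L" by (simp add: N_def)
    finally have nH: "norm (H k) \<le> N * N * L" .
    have "\<bar>proj_psd (H k) $ i $ j\<bar> \<le> 2 * (N * N * L)" for i j
      using entry_le_norm[of "proj_psd (H k)" i j] proj_psd_norm[of "H k"] nH by linarith
    hence "onorm ((*v) (proj_psd (H k))) \<le> real CARD('n) * real CARD('n) * (2 * (N * N * L))"
      by (rule onorm_le_matrix_component)
    hence o: "onorm ((*v) (proj_psd (H k))) \<le> R" by (simp add: R_def N_def)
    have "norm (proj_psd (H k) *v u) \<le> onorm ((*v) (proj_psd (H k))) * norm u"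
      by (rule onorm[OF matrix_vector_mul_bounded_linear])
    also have "\<dots> \<le> R * norm u" using o by (intro mult_right_mono) auto
    finally show ?thesis .
  qed
  note OS = one_step[OF grad lip less_imp_le[OF L0] proj_psd_in eps lampos Pb R0 step]
  have xC: "x (Suc k) \<in> C" for k using OS(1) .
  obtain V where V: "\<And>k. V k \<in> frechet_subdiff f (x (Suc k)) \<and> norm (V k) \<le> (L + (R + \<epsilon>) / lam k) * norm (x (Suc k) - x k)"
    using OS(2) unfolding f_def by metis
  define y where "y k = x (Suc k)" for k
  define F where "F k = h (y k)" for k
  define D where "D k = norm (y (Suc k) - y k)" for k
  define mu where "mu k = lam (Suc k)" for k
  define c where "c = (\<epsilon> - L * lbar) / 2"
  define b where "b = L * lbar + R + \<epsilon>"
  have lbar0: "lbar > 0" using lampos[of 0] lamle[of 0] by linarith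
  have c0: "c > 0" using lbar L0 lbar0 by (simp add: c_def field_simps)
  have b0: "b > 0"
  proof -
    have "L * lbar > 0" using L0 lbar0 by simp
    thus ?thesis using R0 eps by (simp add: b_def)
  qed
  have mu0: "mu k > 0" for k using lampos by (simp add: mu_def)
  have yC: "y k \<in> C" for k using xC by (simp add: y_def)
  have D0: "D k \<ge> 0" for k by (simp add: D_def)
  have desc: "F (Suc k) \<le> F k - c * (D k)^2 / mu k" for k
  proof -
    have 1: "F (Suc k) \<le> F k - ((\<epsilon> / mu k - L) / 2) * (D k)^2"
      using OS(3)[of "Suc k", OF xC[of k]] by (simp add: F_def D_def y_def mu_def)
    have "c / mu k \<le> (\<epsilon> / mu k - L) / 2"
    proof -
      have "c / mu k = (\<epsilon> - L * lbar) / (2 * mu k)" by (simp add: c_def)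
      also have "\<dots> \<le> (\<epsilon> - L * mu k) / (2 * mu k)"
        using lamle[of "Suc k"] L0 mu0[of k] by (intro divide_right_mono) (auto simp: mu_def)
      also have "\<dots> = (\<epsilon> / mu k - L) / 2" using mu0[of k] by (simp add: field_simps)
      finally show ?thesis .
    qed
    hence "c / mu k * (D k)^2 \<le> ((\<epsilon> / mu k - L) / 2) * (D k)^2" by (intro mult_right_mono) auto
    moreover have "c * (D k)^2 / mu k = c / mu k * (D k)^2" by simp
    ultimately show ?thesis using 1 by linarith
  qed
  have sub: "V (Suc k) \<in> frechet_subdiff f (y (Suc k)) \<and> norm (V (Suc k)) \<le> b * D k / mu k" for k
  proof -
    have "norm (V (Suc k)) \<le> (L + (R + \<epsilon>) / mu k) * D k"
      using V[of "Suc k"] by (simp add: D_def y_def mu_def)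
    also have "(L + (R + \<epsilon>) / mu k) = (L * mu k + R + \<epsilon>) / mu k" using mu0[of k] by (simp add: field_simps)
    also have "\<dots> \<le> b / mu k"
      using lamle[of "Suc k"] L0 mu0[of k] by (intro divide_right_mono) (auto simp: mu_def b_def)
    finally have "norm (V (Suc k)) \<le> b / mu k * D k" using D0[of k] by (simp add: mult_right_mono)
    thus ?thesis using V[of "Suc k"] by (simp add: y_def)
  qed
  have hcont: "isCont h z" for z using grad by (rule has_derivative_continuous)
  have bddy: "bounded (range y)"
    using bdd by (rule bounded_subset) (auto simp: y_def)
  obtain B where B: "\<And>k. F k \<ge> -B"
  proof -
    obtain r where r: "\<And>k. norm (x k) \<le> r" using bdd by (auto simp: bounded_iff)
    have cpt: "compact (h ` cball 0 r)"
      by (intro compact_continuous_image continuous_at_imp_continuous_on ballI hcont) simp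
    obtain B where a: "\<forall>z\<in>h ` cball 0 r. norm z \<le> B" using compact_imp_bounded[OF cpt] unfolding bounded_iff by blast
    have "F k \<ge> -B" for k
    proof -
      have "x (Suc k) \<in> cball 0 r" using r[of "Suc k"] by simp
      hence "\<bar>h (x (Suc k))\<bar> \<le> B" using a by auto
      thus ?thesis by (simp add: F_def y_def)
    qed
    thus ?thesis using that by blast
  qed
  have decF: "decseq F"
  proof (rule decseq_SucI)
    fix k have "c * (D k)^2 / mu k \<ge> 0" using c0 mu0[of k] by simp
    thus "F (Suc k) \<le> F k" using desc[of k] by linarith
  qed
  obtain Fs where Fs: "F \<longlonglongrightarrow> Fs" "\<And>i. Fs \<le> F i"
    using decseq_convergent[OF decF, of "-B"] B by blast
  define E where "E k = (D k)^2 / mu k" for k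
  have E0: "E k \<ge> 0" for k using mu0[of k] by (simp add: E_def)
  have tele: "c * (\<Sum>k<n. E k) \<le> F 0 - F n" for n
  proof (induction n)
    case 0 thus ?case by simp
  next
    case (Suc n) thus ?case using desc[of n] by (simp add: E_def distrib_left)
  qed
  have sumE: "summable E"
  proof (rule summableI_nonneg_bounded[where x = "(F 0 + B) / c"])
    show "0 \<le> E k" for k by (rule E0)
    fix n show "sum E {..<n} \<le> (F 0 + B) / c"
      using tele[of n] B[of n] c0 by (simp add: field_simps)
  qed
  have Dlim: "D \<longlonglongrightarrow> 0"
  proof -
    have "summable (\<lambda>k. (D k)^2)"
    proof (rule summable_comparison_test'[where g = "\<lambda>k. lbar * E k" and N = 0])
      show "summable (\<lambda>k. lbar * E k)" using sumE by (rule summable_mult)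
      fix k
      have "(D k)^2 = mu k * E k" using mu0[of k] by (simp add: E_def)
      also have "\<dots> \<le> lbar * E k" using lamle[of "Suc k"] E0[of k] by (intro mult_right_mono) (auto simp: mu_def)
      finally show "norm ((D k)^2) \<le> lbar * E k" by simp
    qed
    hence "(\<lambda>k. (D k)^2) \<longlonglongrightarrow> 0" by (rule summable_LIMSEQ_zero)
    hence "(\<lambda>k. sqrt ((D k)^2)) \<longlonglongrightarrow> sqrt 0" by (rule tendsto_real_sqrt)
    thus ?thesis using D0 by simp
  qed
  define e where "e k = D k / mu k" for k
  have freq: "\<exists>k\<ge>K. e k < d" if d: "d > 0" for K d
  proof (rule ccontr)
    assume "\<not> ?thesis"
    hence ge: "\<And>k. k \<ge> K \<Longrightarrow> e k \<ge> d" by (auto simp: not_less)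
    have "summable mu"
    proof (rule summable_comparison_test'[where g = "\<lambda>k. E k / d^2" and N = K])
      show "summable (\<lambda>k. E k / d^2)" using sumE by (rule summable_divide)
      fix k assume k: "k \<ge> K"
      have "d^2 * mu k \<le> (e k)^2 * mu k"
        using ge[OF k] d mu0[of k] by (intro mult_right_mono power_mono) auto
      also have "\<dots> = E k" using mu0[of k] by (simp add: e_def E_def power2_eq_square)
      finally show "norm (mu k) \<le> E k / d^2" using mu0[of k] d by (simp add: field_simps)
    qed
    hence "summable lam" unfolding mu_def by (simp add: summable_Suc_iff)
    thus False using nsum by simp
  qed
  have e0: "e k \<ge> 0" for k using D0[of k] mu0[of k] by (simp add: e_def)
  obtain s where s: "strict_mono s" "(\<lambda>n. e (s n)) \<longlonglongrightarrow> 0"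
    using subseq_to_zero[of e, OF freq e0] by blast
  have "bounded (range (\<lambda>n. y (Suc (s n))))" using bddy by (rule bounded_subset) auto
  then obtain ys t where t: "strict_mono t" "((\<lambda>n. y (Suc (s n))) \<circ> t) \<longlonglongrightarrow> ys"
    using bounded_imp_convergent_subsequence by blast
  define idx where "idx n = Suc (s (t n))" for n
  have idx_mono: "strict_mono idx" using s(1) t(1) by (simp add: idx_def strict_mono_def)
  have yidx: "(\<lambda>n. y (idx n)) \<longlonglongrightarrow> ys" using t(2) by (simp add: idx_def o_def)
  have ysC: "ys \<in> C" using closedC yC yidx by (rule closed_sequentially)
  have hidx: "(\<lambda>n. h (y (idx n))) \<longlonglongrightarrow> h ys" using yidx hcont by (rule isCont_tendsto_compose[rotated])
  have Fs_eq: "Fs = h ys"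
  proof -
    have "(F \<circ> idx) \<longlonglongrightarrow> Fs" using Fs(1) idx_mono by (rule LIMSEQ_subseq_LIMSEQ)
    hence "(\<lambda>n. h (y (idx n))) \<longlonglongrightarrow> Fs" by (simp add: F_def o_def)
    thus ?thesis using hidx by (rule LIMSEQ_unique)
  qed
  have eidx: "(\<lambda>n. e (s (t n))) \<longlonglongrightarrow> 0"
    using LIMSEQ_subseq_LIMSEQ[OF s(2) t(1)] by (simp add: o_def)
  have crit: "0 \<in> lim_subdiff f ys"
    unfolding lim_subdiff_def
  proof (intro CollectI exI conjI allI)
    show "(\<lambda>n. y (idx n)) \<longlonglongrightarrow> ys" by (rule yidx)
    show "(\<lambda>n. f (y (idx n))) \<longlonglongrightarrow> f ys"
      using hidx yC ysC by (simp add: f_def plus_indicator_def tendsto_ereal)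
    fix n show "V (Suc (s (t n))) \<in> frechet_subdiff f (y (idx n))" using sub[of "s (t n)"] by (simp add: idx_def)
  next
    show "(\<lambda>n. V (Suc (s (t n)))) \<longlonglongrightarrow> 0"
    proof (rule tendsto_norm_zero_cancel, rule tendsto_sandwich[of "\<lambda>_. 0" _ _ "\<lambda>n. b * e (s (t n))"])
      show "\<forall>\<^sub>F n in sequentially. 0 \<le> norm (V (Suc (s (t n))))" by simp
      show "\<forall>\<^sub>F n in sequentially. norm (V (Suc (s (t n)))) \<le> b * e (s (t n))"
        using sub by (simp add: e_def)
      show "(\<lambda>n. b * e (s (t n))) \<longlonglongrightarrow> 0" using tendsto_mult_right_zero[OF eidx] by simp
    qed simp
  qed
  have lsd_ne: "lim_subdiff f ys \<noteq> {}" using crit by blast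
  have "\<forall>xs. lim_subdiff f xs \<noteq> {} \<longrightarrow>
      (\<exists>(\<eta>::ereal) (\<delta>::real) (\<phi>::real \<Rightarrow> real) \<phi>'.
         0 < \<eta> \<and> 0 < \<delta> \<and>
         continuous_on {t. 0 \<le> t \<and> ereal t < \<eta>} \<phi> \<and>
         concave_on {t. 0 \<le> t \<and> ereal t < \<eta>} \<phi> \<and>
         \<phi> 0 = 0 \<and> (\<forall>t. 0 \<le> t \<and> ereal t < \<eta> \<longrightarrow> 0 \<le> \<phi> t) \<and>
         (\<forall>t. 0 < t \<and> ereal t < \<eta> \<longrightarrow> (\<phi> has_real_derivative \<phi>' t) (at t) \<and> 0 < \<phi>' t) \<and>
         continuous_on {t. 0 < t \<and> ereal t < \<eta>} \<phi>' \<and>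
         (\<forall>x. norm (x - xs) < \<delta> \<and> f xs < f x \<and> f x < f xs + \<eta> \<longrightarrow>
            ereal (\<phi>' (real_of_ereal (f x - f xs))) * (INF p\<in>lim_subdiff f x. ereal (norm p)) \<ge> 1))"
    using KL unfolding KL_function_def f_def by blast
  hence "\<exists>(\<eta>::ereal) (\<delta>::real) (\<phi>::real \<Rightarrow> real) \<phi>'.
         0 < \<eta> \<and> 0 < \<delta> \<and>
         continuous_on {t. 0 \<le> t \<and> ereal t < \<eta>} \<phi> \<and>
         concave_on {t. 0 \<le> t \<and> ereal t < \<eta>} \<phi> \<and>
         \<phi> 0 = 0 \<and> (\<forall>t. 0 \<le> t \<and> ereal t < \<eta> \<longrightarrow> 0 \<le> \<phi> t) \<and>
         (\<forall>t. 0 < t \<and> ereal t < \<eta> \<longrightarrow> (\<phi> has_real_derivative \<phi>' t) (at t) \<and> 0 < \<phi>' t) \<and>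
         continuous_on {t. 0 < t \<and> ereal t < \<eta>} \<phi>' \<and>
         (\<forall>x. norm (x - ys) < \<delta> \<and> f ys < f x \<and> f x < f ys + \<eta> \<longrightarrow>
            ereal (\<phi>' (real_of_ereal (f x - f ys))) * (INF p\<in>lim_subdiff f x. ereal (norm p)) \<ge> 1)"
    using lsd_ne by blast
  then obtain \<eta> :: ereal and \<delta> :: real and \<phi> :: "real \<Rightarrow> real" and \<phi>' where
      \<eta>: "0 < \<eta>" and \<delta>: "0 < \<delta>" and
      cont\<phi>: "continuous_on {t. 0 \<le> t \<and> ereal t < \<eta>} \<phi>" and
      conc\<phi>: "concave_on {t. 0 \<le> t \<and> ereal t < \<eta>} \<phi>" and
      \<phi>0: "\<phi> 0 = 0" and \<phi>nn: "\<forall>t. 0 \<le> t \<and> ereal t < \<eta> \<longrightarrow> 0 \<le> \<phi> t" and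
      \<phi>d: "\<forall>t. 0 < t \<and> ereal t < \<eta> \<longrightarrow> (\<phi> has_real_derivative \<phi>' t) (at t) \<and> 0 < \<phi>' t" and
      KLi: "\<forall>x. norm (x - ys) < \<delta> \<and> f ys < f x \<and> f x < f ys + \<eta> \<longrightarrow>
            ereal (\<phi>' (real_of_ereal (f x - f ys))) * (INF p\<in>lim_subdiff f x. ereal (norm p)) \<ge> 1"
    by blast
  have st_mono: "strict_mono (\<lambda>n. s (t n))" using s(1) t(1) by (simp add: strict_mono_def)
  have sumD: "summable D"
  proof (cases "\<exists>k. F k = Fs")
    case True
    then obtain k0 where k0: "F k0 = Fs" by blast
    have Fj: "F j = Fs" if "j \<ge> k0" for j
      using Fs(2)[of j] decF[unfolded decseq_def, rule_format, OF that] k0 by simp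
    have "D j = 0" if "j \<ge> k0" for j
    proof -
      have "c * (D j)^2 / mu j \<le> 0" using desc[of j] Fj[of j] Fj[of "Suc j"] that by simp
      hence "c * (D j)^2 \<le> 0" using mu0[of j] by (simp add: divide_le_0_iff)
      hence "(D j)^2 \<le> 0" using c0 by (simp add: mult_le_0_iff)
      thus ?thesis by simp
    qed
    hence "(\<lambda>j. D (j + k0)) = (\<lambda>_. 0)" by auto
    hence "summable (\<lambda>j. D (j + k0))" by simp
    thus ?thesis by simp
  next
    case False
    have Fgt: "F k > Fs" for k
    proof -
      have "F k \<noteq> Fs" using False by blast
      thus ?thesis using Fs(2)[of k] by simp
    qed
    define r where "r k = F k - Fs" for k
    have r0: "r k > 0" for k using Fgt[of k] by (simp add: r_def)
    have "r = (\<lambda>k. F k - Fs)" by (simp add: r_def fun_eq_iff)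
    hence rlim: "r \<longlonglongrightarrow> 0" using tendsto_diff[OF Fs(1) tendsto_const[of Fs]] by simp
    have "\<forall>\<^sub>F k in sequentially. ereal (r k) < \<eta>"
    proof -
      have "(\<lambda>k. ereal (r k)) \<longlonglongrightarrow> ereal 0" using rlim by (rule tendsto_ereal)
      moreover have "ereal 0 < \<eta>" using \<eta> by (simp add: zero_ereal_def)
      ultimately show ?thesis by (rule order_tendstoD(2))
    qed
    then obtain k1 where k1: "\<And>k. k \<ge> k1 \<Longrightarrow> ereal (r k) < \<eta>" by (auto simp: eventually_sequentially)
    define \<Phi> where "\<Phi> k = \<phi> (r k)" for k
    have \<Phi>lim: "\<Phi> \<longlonglongrightarrow> 0"
    proof -
      have PE: "\<Phi> = (\<lambda>k. \<phi> (r k))" by (simp add: \<Phi>_def fun_eq_iff)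
      have ev: "\<forall>\<^sub>F k in sequentially. r k \<in> {t. 0 \<le> t \<and> ereal t < \<eta>}"
        unfolding eventually_sequentially using k1 r0 less_imp_le by blast
      have "(\<lambda>k. \<phi> (r k)) \<longlonglongrightarrow> \<phi> 0"
        using cont\<phi> rlim _ ev by (rule continuous_on_tendsto_compose) (use \<eta> in \<open>simp add: zero_ereal_def\<close>)
      thus ?thesis by (simp add: PE \<phi>0)
    qed
    have \<Phi>0: "\<Phi> k \<ge> 0" if "k \<ge> k1" for k using \<phi>nn r0[of k] k1[OF that] by (simp add: \<Phi>_def less_imp_le)
    obtain M where M: "\<And>k. lam (Suc k) / lam k \<le> M" using ratio by (auto simp: bdd_above_def)
    have Mpos: "M > 0"
    proof -
      have "lam (Suc 0) / lam 0 > 0" using lampos[of 0] lampos[of 1] by simp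
      thus ?thesis using M[of 0] by linarith
    qed
    define K where "K = b * M / c"
    have K0: "K \<ge> 0" using b0 Mpos c0 by (simp add: K_def)
    have ineq: "2 * D k \<le> D (k - 1) + K * (\<Phi> k - \<Phi> (Suc k))"
      if k: "k \<ge> max k1 1" and nk: "norm (y k - ys) < \<delta>" for k
    proof -
      obtain j where kj: "k = Suc j" using k by (cases k) auto
      have rk: "0 < r k" "ereal (r k) < \<eta>" using r0[of k] k1[of k] k by auto
      have rk1: "0 \<le> r (Suc k)" "ereal (r (Suc k)) < \<eta>" using r0[of "Suc k"] k1[of "Suc k"] k by auto
      have fyk: "f (y k) = ereal (F k)" using yC[of k] by (simp add: f_def plus_indicator_def F_def)
      have fys: "f ys = ereal Fs" using ysC Fs_eq by (simp add: f_def plus_indicator_def)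
      have c1: "f ys < f (y k)" using fyk fys Fgt[of k] by simp
      have c2: "f (y k) < f ys + \<eta>"
      proof (cases \<eta>)
        case (real e') thus ?thesis using rk(2) fyk fys by (simp add: r_def)
      next
        case PInf thus ?thesis using fyk fys by simp
      next
        case MInf thus ?thesis using \<eta> by simp
      qed
      have dk: "(\<phi> has_real_derivative \<phi>' (r k)) (at (r k))" "0 < \<phi>' (r k)" using \<phi>d rk by auto
      have kl1: "1 \<le> ereal (\<phi>' (r k)) * (INF p\<in>lim_subdiff f (y k). ereal (norm p))"
      proof -
        have "1 \<le> ereal (\<phi>' (real_of_ereal (f (y k) - f ys))) * (INF p\<in>lim_subdiff f (y k). ereal (norm p))"
          using KLi nk c1 c2 by blast
        moreover have "real_of_ereal (f (y k) - f ys) = r k" using fyk fys by (simp add: r_def)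
        ultimately show ?thesis by simp
      qed
      have vin: "V k \<in> lim_subdiff f (y k)" using sub[of j] kj by (auto intro: frechet_lim)
      have "(INF p\<in>lim_subdiff f (y k). ereal (norm p)) \<le> ereal (norm (V k))" using vin by (rule INF_lower)
      also have "\<dots> \<le> ereal (b * D j / mu j)" using sub[of j] kj by simp
      finally have fin: "ereal (\<phi>' (r k)) * (INF p\<in>lim_subdiff f (y k). ereal (norm p)) \<le> ereal (\<phi>' (r k)) * ereal (b * D j / mu j)"
        using dk by (intro ereal_mult_left_mono) auto
      have "(1::ereal) \<le> ereal (\<phi>' (r k)) * ereal (b * D j / mu j)" using order_trans[OF kl1 fin] .
      hence "ereal 1 \<le> ereal (\<phi>' (r k) * (b * D j / mu j))" by (simp only: times_ereal.simps one_ereal_def)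
      hence h1: "1 \<le> \<phi>' (r k) * (b * D j / mu j)" by (simp only: ereal_less_eq)
      have conc: "\<phi>' (r k) * (r k - r (Suc k)) \<le> \<Phi> k - \<Phi> (Suc k)"
        unfolding \<Phi>_def using concave_tangent[OF conc\<phi> rk rk1 dk(1)] .
      have "r k - r (Suc k) \<ge> c * (D k)^2 / mu k" using desc[of k] by (simp add: r_def)
      hence "\<phi>' (r k) * (c * (D k)^2 / mu k) \<le> \<phi>' (r k) * (r k - r (Suc k))"
        using dk(2) by (intro mult_left_mono) auto
      hence h2: "\<phi>' (r k) * (c * (D k)^2 / mu k) \<le> \<Phi> k - \<Phi> (Suc k)" using conc by linarith
      have mu: "mu k \<le> M * mu j" using M[of "Suc j"] mu0[of j] kj by (simp add: mu_def pos_divide_le_eq)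
      show ?thesis
        using kl_step_ineq[OF mu0[of j] mu0[of k] mu Mpos c0 b0 D0[of j] D0[of k] dk(2) h1 h2] kj
        by (simp add: K_def)
    qed
    have ev: "\<forall>\<^sub>F n in sequentially. max k1 1 \<le> idx n \<and> norm (y (idx n) - ys) + D (idx n - 1) + K * \<Phi> (idx n) < \<delta>"
    proof (intro eventually_conj)
      show "\<forall>\<^sub>F n in sequentially. max k1 1 \<le> idx n"
        unfolding eventually_sequentially using seq_suble[OF idx_mono] le_trans by blast
      have l1: "(\<lambda>n. norm (y (idx n) - ys)) \<longlonglongrightarrow> 0"
        using tendsto_norm_zero[OF LIM_zero[OF yidx]] .
      have l2: "(\<lambda>n. D (idx n - 1)) \<longlonglongrightarrow> 0"
        using LIMSEQ_subseq_LIMSEQ[OF Dlim st_mono] by (simp add: idx_def o_def)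
      have l3: "(\<lambda>n. K * \<Phi> (idx n)) \<longlonglongrightarrow> 0"
        using tendsto_mult_right_zero[OF LIMSEQ_subseq_LIMSEQ[OF \<Phi>lim idx_mono], of K] by (simp add: o_def)
      have "(\<lambda>n. norm (y (idx n) - ys) + D (idx n - 1) + K * \<Phi> (idx n)) \<longlonglongrightarrow> 0 + 0 + 0"
        by (intro tendsto_add l1 l2 l3)
      thus "\<forall>\<^sub>F n in sequentially. norm (y (idx n) - ys) + D (idx n - 1) + K * \<Phi> (idx n) < \<delta>"
        using \<delta> by (intro order_tendstoD(2)) auto
    qed
    then obtain n0 where n0: "max k1 1 \<le> idx n0" "norm (y (idx n0) - ys) + D (idx n0 - 1) + K * \<Phi> (idx n0) < \<delta>"
      unfolding eventually_sequentially by blast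
    show ?thesis
    proof (rule kl_induct[where kz = "idx n0" and ys = ys and \<delta> = \<delta> and K = K and \<Phi> = \<Phi> and y = y])
      show "\<And>k. D k = norm (y (Suc k) - y k)" by (simp add: D_def)
      show "\<And>k. idx n0 \<le> k \<Longrightarrow> norm (y k - ys) < \<delta> \<Longrightarrow> 2 * D k \<le> D (k - 1) + K * (\<Phi> k - \<Phi> (Suc k))"
        using ineq n0(1) le_trans by blast
      show "\<And>k. idx n0 \<le> k \<Longrightarrow> 0 \<le> \<Phi> k" using \<Phi>0 n0(1) by auto
      show "0 \<le> K" by (rule K0)
      show "norm (y (idx n0) - ys) + D (idx n0 - 1) + K * \<Phi> (idx n0) < \<delta>" by (rule n0(2))
    qed
  qed
  have DE: "D = (\<lambda>k. norm (y (Suc k) - y k))" by (simp add: D_def fun_eq_iff)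
  have "convergent y" using sumD unfolding DE by (rule summable_norm_diff_convergent)
  then obtain yl where yl: "y \<longlonglongrightarrow> yl" by (auto simp: convergent_def)
  have "(y \<circ> idx) \<longlonglongrightarrow> yl" using yl idx_mono by (rule LIMSEQ_subseq_LIMSEQ)
  hence "(\<lambda>n. y (idx n)) \<longlonglongrightarrow> yl" by (simp add: o_def)
  hence "yl = ys" using yidx by (rule LIMSEQ_unique)
  moreover have "y = (\<lambda>n. x (Suc n))" by (simp add: y_def fun_eq_iff)
  ultimately have "(\<lambda>n. x (Suc n)) \<longlonglongrightarrow> ys" using yl by simp
  hence xlim: "x \<longlonglongrightarrow> ys" by (rule filterlim_sequentially_Suc[THEN iffD1])
  have "summable (\<lambda>k. norm (x (Suc (Suc k)) - x (Suc k)))" using sumD unfolding DE by (simp add: y_def)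
  hence "summable (\<lambda>k. norm (x (Suc k) - x k))"
    using summable_Suc_iff[of "\<lambda>k. norm (x (Suc k) - x k)"] by simp
  thus ?thesis using xlim crit by (auto simp: f_def)
qed

end
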